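(* Let $n\geq 2$, let $F_n$ be the free metabelian Lie algebra generated by $x_1,\ldots,x_n$ over a field $K$ of characteristic zero, and let $F_n'$ be its commutator ideal. For $u\in F_n'$ let $\psi_u=\exp(\mathrm{ad}\,u)=1+\mathrm{ad}\,u$, i.e. $\psi_u(v)=v+[v,u]$ for $v\in F_n$. Then $\psi_u$ maps the algebra $F_n^{S_n}$ of symmetric polynomials into itself (i.e. $\psi_u\in \mathrm{Inn}(F_n^{S_n})$) if and only if $u\in (F_n')^{S_n}$, that is, $u$ is itself symmetric.
   Context: The free metabelian Lie algebra is $F_n=L_n/L_n''$, where $L_n$ is the free Lie algebra on $x_1,\ldots,x_n$. The symmetric group $S_n$ acts on $F_n$ by permuting the generators: $\pi\, p(x_1,\ldots,x_n)=p(x_{\pi(1)},\ldots,x_{\pi(n)})$. An element $p$ is symmetric if $\pi p=p$ for all $\pi\in S_n$; $F_n^{S_n}$ is the algebra of symmetric elements of $F_n$ and $(F_n')^{S_n}=F_n'\cap F_n^{S_n}$. For $u\in F_n'$, $\psi_u$ is an automorphism of $F_n$ (an inner automorphism), and $\mathrm{Inn}(F_n^{S_n})$ denotes the group of inner automorphisms $\psi_u$ of $F_n$ which map $F_n^{S_n}$ into itself. *)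

theory Defs
  imports "HOL-Library.Poly_Mapping" "HOL-Combinatorics.Permutations"
begin

(* Free associative algebra K<x_0,...> : noncommutative polynomials, i.e.
   finitely supported maps from words (lists of letter indices) to K. *)
type_synonym 'k ncpoly = "nat list \<Rightarrow>\<^sub>0 'k"

definition ncmul :: "'k::comm_ring_1 ncpoly \<Rightarrow> 'k ncpoly \<Rightarrow> 'k ncpoly" where
  "ncmul p q = (\<Sum>u\<in>Poly_Mapping.keys p. \<Sum>w\<in>Poly_Mapping.keys q.
       Poly_Mapping.single (u @ w) (Poly_Mapping.lookup p u * Poly_Mapping.lookup q w))"

definition ncscale :: "'k::comm_ring_1 \<Rightarrow> 'k ncpoly \<Rightarrow> 'k ncpoly" where
  "ncscale a p = ncmul (Poly_Mapping.single [] a) p"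

definition lie_br :: "'k::comm_ring_1 ncpoly \<Rightarrow> 'k ncpoly \<Rightarrow> 'k ncpoly" where
  "lie_br p q = ncmul p q - ncmul q p"

(* the generator x_i (indices 0..n-1 stand for x_1..x_n) *)
definition gen :: "nat \<Rightarrow> 'k::comm_ring_1 ncpoly" where
  "gen i = Poly_Mapping.single [i] 1"

(* Free Lie algebra L_n: the Lie subalgebra of K<x_0..x_{n-1}> generated by
   x_0,...,x_{n-1} (a standard realisation of the free Lie algebra) *)
inductive_set free_lie :: "nat \<Rightarrow> 'k::comm_ring_1 ncpoly set" for n where
  gen_in: "i < n \<Longrightarrow> gen i \<in> free_lie n"
| zero_in: "0 \<in> free_lie n"
| add_in: "p \<in> free_lie n \<Longrightarrow> q \<in> free_lie n \<Longrightarrow> p + q \<in> free_lie n"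
| scale_in: "p \<in> free_lie n \<Longrightarrow> ncscale a p \<in> free_lie n"
| br_in: "p \<in> free_lie n \<Longrightarrow> q \<in> free_lie n \<Longrightarrow> lie_br p q \<in> free_lie n"

inductive_set comm_span :: "'k::comm_ring_1 ncpoly set \<Rightarrow> 'k ncpoly set \<Rightarrow> 'k ncpoly set"
  for A B where
  br_in: "a \<in> A \<Longrightarrow> b \<in> B \<Longrightarrow> lie_br a b \<in> comm_span A B"
| zero_in: "0 \<in> comm_span A B"
| add_in: "p \<in> comm_span A B \<Longrightarrow> q \<in> comm_span A B \<Longrightarrow> p + q \<in> comm_span A B"
| scale_in: "p \<in> comm_span A B \<Longrightarrow> ncscale a p \<in> comm_span A B"

definition L1 :: "nat \<Rightarrow> 'k::comm_ring_1 ncpoly set" where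
  "L1 n = comm_span (free_lie n) (free_lie n)"

definition L2 :: "nat \<Rightarrow> 'k::comm_ring_1 ncpoly set" where
  "L2 n = comm_span (L1 n) (L1 n)"

definition perm_act :: "(nat \<Rightarrow> nat) \<Rightarrow> 'k::comm_ring_1 ncpoly \<Rightarrow> 'k ncpoly" where
  "perm_act \<pi> p = (\<Sum>w\<in>Poly_Mapping.keys p. Poly_Mapping.single (map \<pi> w) (Poly_Mapping.lookup p w))"

(* the class of p \<in> L_n in F_n = L_n / L_n'' is symmetric *)
definition sym_F :: "nat \<Rightarrow> 'k::comm_ring_1 ncpoly \<Rightarrow> bool" where
  "sym_F n p \<longleftrightarrow> (\<forall>\<pi>. \<pi> permutes {..<n} \<longrightarrow> perm_act \<pi> p - p \<in> L2 n)"

definition psi :: "'k::comm_ring_1 ncpoly \<Rightarrow> 'k ncpoly \<Rightarrow> 'k ncpoly" where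
  "psi u v = v + lie_br v u"

end

theory Submission
  imports Defs
begin

instantiation list :: (type) monoid_add
begin
definition zero_list_def: "0 = []"
definition plus_list_def: "(xs::'a list) + ys = xs @ ys"
instance by standard (auto simp: zero_list_def plus_list_def)
end

definition lext :: "('a \<Rightarrow> 'b::zero \<Rightarrow> 'c::comm_monoid_add) \<Rightarrow> ('a \<Rightarrow>\<^sub>0 'b) \<Rightarrow> 'c" where
  "lext g p = (\<Sum>k\<in>Poly_Mapping.keys p. g k (Poly_Mapping.lookup p k))"

lemma lext_add:
  assumes "\<And>k. g k 0 = 0" "\<And>k a b. g k (a+b) = g k a + g k b"
  shows "lext g (p+q) = lext g p + lext g q"
  unfolding lext_def by (rule setsum_keys_plus_distrib) (use assms in auto)

lemma lext_zero[simp]: "lext g 0 = 0"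
  by (simp add: lext_def)

lemma lext_single:
  assumes "\<And>k. g k 0 = 0"
  shows "lext g (Poly_Mapping.single k a) = g k a"
  using assms by (simp add: lext_def)

lemma pm_expand: "p = (\<Sum>k\<in>Poly_Mapping.keys p. Poly_Mapping.single k (Poly_Mapping.lookup p k))"
proof (rule poly_mapping_eqI)
  fix x
  have "(\<Sum>k\<in>Poly_Mapping.keys p. Poly_Mapping.lookup (Poly_Mapping.single k (Poly_Mapping.lookup p k)) x)
      = (\<Sum>k\<in>Poly_Mapping.keys p. if k = x then Poly_Mapping.lookup p k else 0)"
    by (rule sum.cong) (auto simp: lookup_single)
  also have "\<dots> = Poly_Mapping.lookup p x"
    by (auto simp: in_keys_iff)
  finally show "Poly_Mapping.lookup p x = Poly_Mapping.lookup (\<Sum>k\<in>Poly_Mapping.keys p. Poly_Mapping.single k (Poly_Mapping.lookup p k)) x"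
    by (simp add: lookup_sum)
qed

lemma pm_induct[case_names zero single add]:
  fixes p :: "'a \<Rightarrow>\<^sub>0 'b::comm_monoid_add"
  assumes "P 0" "\<And>k a. P (Poly_Mapping.single k a)" "\<And>p q. P p \<Longrightarrow> P q \<Longrightarrow> P (p + q)"
  shows "P p"
proof -
  have "P (\<Sum>k\<in>A. Poly_Mapping.single k (Poly_Mapping.lookup p k))" if "finite A" for A
    using that by (induction A rule: finite_induct) (auto intro: assms)
  then show ?thesis using pm_expand[of p] by (metis finite_keys)
qed

lemma biadd_eq:
  fixes F G :: "('a \<Rightarrow>\<^sub>0 'b::comm_monoid_add) \<Rightarrow> ('c \<Rightarrow>\<^sub>0 'd::comm_monoid_add) \<Rightarrow> 'e::ab_group_add"
  assumes "\<And>p p' q. F (p+p') q = F p q + F p' q" "\<And>p q q'. F p (q+q') = F p q + F p q'"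
    "\<And>p p' q. G (p+p') q = G p q + G p' q" "\<And>p q q'. G p (q+q') = G p q + G p q'"
    "\<And>k a l b. F (Poly_Mapping.single k a) (Poly_Mapping.single l b) = G (Poly_Mapping.single k a) (Poly_Mapping.single l b)"
  shows "F p q = G p q"
proof -
  have F0: "F 0 q = 0" "F p 0 = 0" for p q using assms(1)[of 0 0 q] assms(2)[of p 0 0] by auto
  have G0: "G 0 q = 0" "G p 0 = 0" for p q using assms(3)[of 0 0 q] assms(4)[of p 0 0] by auto
  have "F (Poly_Mapping.single k a) q = G (Poly_Mapping.single k a) q" for k a
    by (induction q rule: pm_induct) (auto simp: F0 G0 assms)
  then show ?thesis
    by (induction p rule: pm_induct) (auto simp: F0 G0 assms)
qed

lemma single_mult_list: "Poly_Mapping.single u a * Poly_Mapping.single w b = Poly_Mapping.single (u @ w) (a * b)"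
  by (simp add: mult_single plus_list_def)

lemma ncmul_eq: "ncmul p q = p * q"
proof -
  have "ncmul p q = (\<Sum>u\<in>Poly_Mapping.keys p. \<Sum>w\<in>Poly_Mapping.keys q.
       Poly_Mapping.single u (Poly_Mapping.lookup p u) * Poly_Mapping.single w (Poly_Mapping.lookup q w))"
    by (simp add: ncmul_def single_mult_list)
  also have "\<dots> = (\<Sum>u\<in>Poly_Mapping.keys p. Poly_Mapping.single u (Poly_Mapping.lookup p u)) *
        (\<Sum>w\<in>Poly_Mapping.keys q. Poly_Mapping.single w (Poly_Mapping.lookup q w))"
    by (simp add: sum_product)
  also have "\<dots> = p * q" using pm_expand[of p] pm_expand[of q] by simp
  finally show ?thesis .
qed

lemma ncscale_eq: "ncscale a p = Poly_Mapping.single [] a * p"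
  by (simp add: ncscale_def ncmul_eq)

lemma lie_br_eq: "lie_br p q = p * q - q * p"
  by (simp add: lie_br_def ncmul_eq)

lemma const_comm: "Poly_Mapping.single [] (a::'k::comm_ring_1) * p = p * Poly_Mapping.single [] a"
  by (induction p rule: pm_induct) (auto simp: single_mult_list distrib_left distrib_right mult.commute)

type_synonym 'k ncp = "'k ncpoly"

lemma single_nil_one: "Poly_Mapping.single [] (1::'k::comm_ring_1) = 1"
  by (metis single_one zero_list_def)

lemma ncscale_add: "ncscale a (p + q) = ncscale a p + ncscale a q"
  by (simp add: ncscale_eq distrib_left)
lemma ncscale_add2: "ncscale (a + b) p = ncscale a p + ncscale b p"
  by (simp add: ncscale_eq single_add distrib_right)
lemma ncscale_mult: "ncscale a (ncscale b p) = ncscale (a * b) p"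
  by (simp add: ncscale_eq mult.assoc[symmetric] single_mult_list)
lemma ncscale_one[simp]: "ncscale 1 p = p"
  by (simp add: ncscale_eq single_nil_one)
lemma ncscale_zero[simp]: "ncscale 0 p = 0" "ncscale a 0 = 0"
  by (simp_all add: ncscale_eq)
lemma ncscale_neg: "ncscale (-1) p = - p"
  by (simp add: ncscale_eq single_uminus single_nil_one)
lemma ncscale_neg2: "ncscale (-a) p = - ncscale a p"
  by (simp add: ncscale_eq single_uminus)
lemma ncscale_minus: "ncscale a (- p) = - ncscale a p"
  by (simp add: ncscale_eq)
lemma ncscale_diff: "ncscale a (p - q) = ncscale a p - ncscale a q"
  by (simp add: ncscale_eq right_diff_distrib)

lemma lie_add1: "lie_br (p + q) r = lie_br p r + lie_br q r"
  by (simp add: lie_br_eq algebra_simps)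
lemma lie_add2: "lie_br r (p + q) = lie_br r p + lie_br r q"
  by (simp add: lie_br_eq algebra_simps)
lemma lie_diff1: "lie_br (p - q) r = lie_br p r - lie_br q r"
  by (simp add: lie_br_eq algebra_simps)
lemma lie_diff2: "lie_br r (p - q) = lie_br r p - lie_br r q"
  by (simp add: lie_br_eq algebra_simps)
lemma lie_neg1: "lie_br (- p) r = - lie_br p r"
  by (simp add: lie_br_eq algebra_simps)
lemma lie_neg2: "lie_br r (- p) = - lie_br r p"
  by (simp add: lie_br_eq algebra_simps)
lemma lie_zero[simp]: "lie_br 0 p = 0" "lie_br p 0 = 0" "lie_br p p = 0"
  by (simp_all add: lie_br_eq)
lemma lie_anti: "lie_br p q = - lie_br q p"
  by (simp add: lie_br_eq)
lemma lie_scale1: "lie_br (ncscale a p) q = ncscale a (lie_br p q)"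
  by (simp add: lie_br_eq ncscale_eq algebra_simps const_comm)
lemma lie_scale2: "lie_br q (ncscale a p) = ncscale a (lie_br q p)"
  by (simp add: lie_br_eq ncscale_eq algebra_simps const_comm)
lemma jacobi: "lie_br p (lie_br q r) = lie_br (lie_br p q) r - lie_br (lie_br p r) q"
  by (simp add: lie_br_eq algebra_simps)

lemmas lie_lin = lie_add1 lie_add2 lie_diff1 lie_diff2 lie_neg1 lie_neg2 lie_scale1 lie_scale2

lemma free_lie_neg: "p \<in> free_lie n \<Longrightarrow> - p \<in> free_lie n"
  by (metis free_lie.scale_in ncscale_neg)
lemma free_lie_diff: "p \<in> free_lie n \<Longrightarrow> q \<in> free_lie n \<Longrightarrow> p - q \<in> free_lie n"
  by (metis diff_conv_add_uminus free_lie.add_in free_lie_neg)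
lemma cs_neg: "p \<in> comm_span A B \<Longrightarrow> - p \<in> comm_span A B"
  by (metis comm_span.scale_in ncscale_neg)
lemma cs_diff: "p \<in> comm_span A B \<Longrightarrow> q \<in> comm_span A B \<Longrightarrow> p - q \<in> comm_span A B"
  by (metis diff_conv_add_uminus comm_span.add_in cs_neg)

lemma L2_0: "0 \<in> L2 n" by (simp add: L2_def comm_span.zero_in)
lemma L2_add: "p \<in> L2 n \<Longrightarrow> q \<in> L2 n \<Longrightarrow> p + q \<in> L2 n" by (simp add: L2_def comm_span.add_in)
lemma L2_scale: "p \<in> L2 n \<Longrightarrow> ncscale a p \<in> L2 n" by (simp add: L2_def comm_span.scale_in)
lemma L2_neg: "p \<in> L2 n \<Longrightarrow> - p \<in> L2 n" by (simp add: L2_def cs_neg)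
lemma L2_diff: "p \<in> L2 n \<Longrightarrow> q \<in> L2 n \<Longrightarrow> p - q \<in> L2 n" by (simp add: L2_def cs_diff)
lemma L1_0: "0 \<in> L1 n" by (simp add: L1_def comm_span.zero_in)
lemma L1_add: "p \<in> L1 n \<Longrightarrow> q \<in> L1 n \<Longrightarrow> p + q \<in> L1 n" by (simp add: L1_def comm_span.add_in)
lemma L1_scale: "p \<in> L1 n \<Longrightarrow> ncscale a p \<in> L1 n" by (simp add: L1_def comm_span.scale_in)
lemma L1_neg: "p \<in> L1 n \<Longrightarrow> - p \<in> L1 n" by (simp add: L1_def cs_neg)
lemma L1_diff: "p \<in> L1 n \<Longrightarrow> q \<in> L1 n \<Longrightarrow> p - q \<in> L1 n" by (simp add: L1_def cs_diff)

lemma L1_br: "a \<in> free_lie n \<Longrightarrow> b \<in> free_lie n \<Longrightarrow> lie_br a b \<in> L1 n"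
  by (simp add: L1_def comm_span.br_in)

lemma L1_sub: "p \<in> L1 n \<Longrightarrow> p \<in> free_lie n"
  unfolding L1_def by (induction rule: comm_span.induct) (auto intro: free_lie.intros)

lemma L1_rbr: "a \<in> L1 n \<Longrightarrow> x \<in> free_lie n \<Longrightarrow> lie_br a x \<in> L1 n"
  using L1_br L1_sub by blast

lemma L2_br: "a \<in> L1 n \<Longrightarrow> b \<in> L1 n \<Longrightarrow> lie_br a b \<in> L2 n"
  by (simp add: L2_def comm_span.br_in)

lemma L2_sub: "p \<in> L2 n \<Longrightarrow> p \<in> L1 n"
  unfolding L2_def by (induction rule: comm_span.induct) (auto intro: L1_br L1_sub L1_0 L1_add L1_scale)

lemma L2_rbr0: "l \<in> comm_span (L1 n) (L1 n) \<Longrightarrow> x \<in> free_lie n \<Longrightarrow> lie_br l x \<in> L2 n"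
proof (induction l rule: comm_span.induct)
  case (br_in a b)
  have "lie_br (lie_br a b) x = - lie_br a (lie_br x b) + lie_br b (lie_br x a)"
    by (simp add: lie_br_eq algebra_simps)
  moreover have "lie_br a (lie_br x b) \<in> L2 n" using br_in L1_br L1_sub L2_br by blast
  moreover have "lie_br b (lie_br x a) \<in> L2 n" using br_in L1_br L1_sub L2_br by blast
  ultimately show ?case by (simp add: L2_diff)
next
  case zero_in then show ?case by (simp add: L2_0)
next
  case (add_in p q) then show ?case by (simp add: lie_add1 L2_add)
next
  case (scale_in p a) then show ?case by (simp add: lie_scale1 L2_scale)
qed

lemma L2_rbr: "l \<in> L2 n \<Longrightarrow> x \<in> free_lie n \<Longrightarrow> lie_br l x \<in> L2 n"
  using L2_rbr0 L2_def by metis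

lemma L2_lbr: "l \<in> L2 n \<Longrightarrow> x \<in> free_lie n \<Longrightarrow> lie_br x l \<in> L2 n"
  by (metis L2_neg L2_rbr lie_anti)

lemma perm_act_lext: "perm_act \<pi> p = lext (\<lambda>w c. Poly_Mapping.single (map \<pi> w) c) p"
  by (simp add: perm_act_def lext_def)

lemma perm_act_add: "perm_act \<pi> (p + q) = perm_act \<pi> p + perm_act \<pi> q"
  unfolding perm_act_lext by (rule lext_add) (auto simp: single_add)

lemma perm_act_single: "perm_act \<pi> (Poly_Mapping.single w c) = Poly_Mapping.single (map \<pi> w) c"
  unfolding perm_act_lext by (rule lext_single) simp

lemma perm_act_zero[simp]: "perm_act \<pi> 0 = 0"
  by (simp add: perm_act_def)

lemma perm_act_neg: "perm_act \<pi> (- p) = - perm_act \<pi> p"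
  by (metis add_eq_0_iff2 perm_act_add perm_act_zero)

lemma perm_act_diff: "perm_act \<pi> (p - q) = perm_act \<pi> p - perm_act \<pi> q"
  by (metis diff_conv_add_uminus perm_act_add perm_act_neg)

lemma perm_act_mult: "perm_act \<pi> (p * q) = perm_act \<pi> p * perm_act \<pi> q"
  by (rule biadd_eq[where F="\<lambda>p q. perm_act \<pi> (p * q)" and G="\<lambda>p q. perm_act \<pi> p * perm_act \<pi> q"])
     (auto simp: perm_act_add distrib_left distrib_right single_mult_list perm_act_single)

lemma perm_act_scale: "perm_act \<pi> (ncscale a p) = ncscale a (perm_act \<pi> p)"
  by (simp add: ncscale_eq perm_act_mult perm_act_single)

lemma perm_act_br: "perm_act \<pi> (lie_br p q) = lie_br (perm_act \<pi> p) (perm_act \<pi> q)"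
  by (simp add: lie_br_eq perm_act_mult perm_act_diff)

lemma perm_act_gen: "perm_act \<pi> (gen i) = gen (\<pi> i)"
  by (simp add: gen_def perm_act_single)

lemma perm_free_lie0: "p \<in> free_lie n \<Longrightarrow> \<pi> permutes {..<n} \<Longrightarrow> perm_act \<pi> p \<in> free_lie n"
  by (induction rule: free_lie.induct)
     (auto simp: perm_act_gen perm_act_add perm_act_scale perm_act_br intro: free_lie.intros,
      metis free_lie.gen_in lessThan_iff permutes_in_image)

lemma perm_free_lie: "\<pi> permutes {..<n} \<Longrightarrow> p \<in> free_lie n \<Longrightarrow> perm_act \<pi> p \<in> free_lie n"
  using perm_free_lie0 by blast

lemma perm_cs:
  assumes "\<And>a. a \<in> A \<Longrightarrow> perm_act \<pi> a \<in> A'" "\<And>b. b \<in> B \<Longrightarrow> perm_act \<pi> b \<in> B'"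
  shows "p \<in> comm_span A B \<Longrightarrow> perm_act \<pi> p \<in> comm_span A' B'"
  by (induction rule: comm_span.induct)
     (auto simp: perm_act_add perm_act_scale perm_act_br assms intro: comm_span.intros)

lemma perm_L1: "\<pi> permutes {..<n} \<Longrightarrow> p \<in> L1 n \<Longrightarrow> perm_act \<pi> p \<in> L1 n"
  unfolding L1_def by (rule perm_cs) (auto intro: perm_free_lie)

lemma perm_L2: "\<pi> permutes {..<n} \<Longrightarrow> p \<in> L2 n \<Longrightarrow> perm_act \<pi> p \<in> L2 n"
  unfolding L2_def by (rule perm_cs) (auto intro: perm_L1)

definition ssum :: "nat \<Rightarrow> 'k::comm_ring_1 ncpoly" where
  "ssum n = (\<Sum>i<n. gen i)"

lemma perm_act_sum: "perm_act \<pi> (sum f A) = (\<Sum>i\<in>A. perm_act \<pi> (f i))"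
  by (induction A rule: infinite_finite_induct) (auto simp: perm_act_add)

lemma ssum_free: "ssum n \<in> free_lie n"
proof -
  have "(\<Sum>i\<in>A. gen i) \<in> free_lie n" if "finite A" "A \<subseteq> {..<n}" for A
    using that by (induction A rule: finite_induct) (auto intro: free_lie.intros)
  then show ?thesis unfolding ssum_def by blast
qed

lemma ssum_perm: "\<pi> permutes {..<n} \<Longrightarrow> perm_act \<pi> (ssum n) = ssum n"
  unfolding ssum_def perm_act_sum perm_act_gen
  by (metis (mono_tags, lifting) comp_apply sum.cong sum.permute)


type_synonym 'k mp = "(nat \<Rightarrow>\<^sub>0 nat) \<Rightarrow>\<^sub>0 'k"

definition mono :: "nat list \<Rightarrow> (nat \<Rightarrow>\<^sub>0 nat)" where
  "mono w = sum_list (map (\<lambda>k. Poly_Mapping.single (2*k) 1) w)"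

lemma mono_simps[simp]: "mono [] = 0" "mono (k # w) = Poly_Mapping.single (2*k) 1 + mono w"
  "mono (u @ w) = mono u + mono w"
  by (simp_all add: mono_def)

definition Phi1 :: "'k::comm_ring_1 ncpoly \<Rightarrow> 'k mp" where
  "Phi1 p = lext (\<lambda>w c. Poly_Mapping.single (mono w) c) p"
definition Eps :: "'k::comm_ring_1 ncpoly \<Rightarrow> 'k mp" where
  "Eps p = lext (\<lambda>w c. if w = [] then Poly_Mapping.single 0 c else 0) p"
definition Phi2 :: "'k::comm_ring_1 ncpoly \<Rightarrow> 'k mp" where
  "Phi2 p = lext (\<lambda>w c. if w = [] then 0 else
      Poly_Mapping.single (mono (butlast w) + Poly_Mapping.single (2 * last w + 1) 1) c) p"

lemma Phi1_add: "Phi1 (p + q) = Phi1 p + Phi1 q"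
  unfolding Phi1_def by (rule lext_add) (auto simp: single_add)
lemma Eps_add: "Eps (p + q) = Eps p + Eps q"
  unfolding Eps_def by (rule lext_add) (auto simp: single_add)
lemma Phi2_add: "Phi2 (p + q) = Phi2 p + Phi2 q"
  unfolding Phi2_def by (rule lext_add) (auto simp: single_add)

lemma Phi1_single: "Phi1 (Poly_Mapping.single w c) = Poly_Mapping.single (mono w) c"
  unfolding Phi1_def by (rule lext_single) auto
lemma Eps_single: "Eps (Poly_Mapping.single w c) = (if w = [] then Poly_Mapping.single 0 c else 0)"
  unfolding Eps_def by (rule lext_single) auto
lemma Phi2_single: "Phi2 (Poly_Mapping.single w c) = (if w = [] then 0 else
      Poly_Mapping.single (mono (butlast w) + Poly_Mapping.single (2 * last w + 1) 1) c)"
  unfolding Phi2_def by (rule lext_single) auto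

lemma Phi1_zero[simp]: "Phi1 0 = 0" by (simp add: Phi1_def)
lemma Eps_zero[simp]: "Eps 0 = 0" by (simp add: Eps_def)
lemma Phi2_zero[simp]: "Phi2 0 = 0" by (simp add: Phi2_def)

lemma Phi1_neg: "Phi1 (- p) = - Phi1 p" by (metis add_eq_0_iff2 Phi1_add Phi1_zero)
lemma Eps_neg: "Eps (- p) = - Eps p" by (metis add_eq_0_iff2 Eps_add Eps_zero)
lemma Phi2_neg: "Phi2 (- p) = - Phi2 p" by (metis add_eq_0_iff2 Phi2_add Phi2_zero)
lemma Phi1_diff: "Phi1 (p - q) = Phi1 p - Phi1 q" by (metis diff_conv_add_uminus Phi1_add Phi1_neg)
lemma Eps_diff: "Eps (p - q) = Eps p - Eps q" by (metis diff_conv_add_uminus Eps_add Eps_neg)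
lemma Phi2_diff: "Phi2 (p - q) = Phi2 p - Phi2 q" by (metis diff_conv_add_uminus Phi2_add Phi2_neg)

lemma Phi1_mult: "Phi1 (p * q) = Phi1 p * Phi1 q"
  by (rule biadd_eq[where F="\<lambda>p q. Phi1 (p * q)" and G="\<lambda>p q. Phi1 p * Phi1 q"])
     (auto simp: Phi1_add distrib_left distrib_right single_mult_list Phi1_single mult_single)

lemma Eps_mult: "Eps (p * q) = Eps p * Eps q"
  by (rule biadd_eq[where F="\<lambda>p q. Eps (p * q)" and G="\<lambda>p q. Eps p * Eps q"])
     (auto simp: Eps_add distrib_left distrib_right single_mult_list Eps_single mult_single)

lemma Phi2_mult: "Phi2 (p * q) = Phi1 p * Phi2 q + Phi2 p * Eps q"
proof (rule biadd_eq[where F="\<lambda>p q. Phi2 (p * q)" and G="\<lambda>p q. Phi1 p * Phi2 q + Phi2 p * Eps q"])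
  fix u a w b
  show "Phi2 (Poly_Mapping.single u a * Poly_Mapping.single w b) =
    Phi1 (Poly_Mapping.single u a) * Phi2 (Poly_Mapping.single w b) + Phi2 (Poly_Mapping.single u a) * Eps (Poly_Mapping.single w b)"
    by (cases "w = []") (auto simp: single_mult_list Phi2_single Phi1_single Eps_single mult_single butlast_append add.assoc)
qed (auto simp: Phi2_add Phi1_add Eps_add distrib_left distrib_right)

lemma Phi1_br[simp]: "Phi1 (lie_br p q) = 0"
  by (simp add: lie_br_eq Phi1_diff Phi1_mult mult.commute)
lemma Eps_br[simp]: "Eps (lie_br p q) = 0"
  by (simp add: lie_br_eq Eps_diff Eps_mult mult.commute)
lemma Phi2_br: "Phi2 (lie_br p q) = Phi1 p * Phi2 q + Phi2 p * Eps q - Phi1 q * Phi2 p - Phi2 q * Eps p"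
  by (simp add: lie_br_eq Phi2_diff Phi2_mult)

lemma Phi1_scale: "Phi1 (ncscale a p) = Poly_Mapping.single 0 a * Phi1 p"
  by (simp add: ncscale_eq Phi1_mult Phi1_single)
lemma Eps_scale: "Eps (ncscale a p) = Poly_Mapping.single 0 a * Eps p"
  by (simp add: ncscale_eq Eps_mult Eps_single)
lemma Phi2_scale: "Phi2 (ncscale a p) = Poly_Mapping.single 0 a * Phi2 p"
  by (simp add: ncscale_eq Phi2_mult Phi1_single Phi2_single)

lemma Eps_free: "p \<in> free_lie n \<Longrightarrow> Eps p = 0"
  by (induction rule: free_lie.induct) (auto simp: gen_def Eps_single Eps_add Eps_scale)

lemma Phi1_L1: "p \<in> L1 n \<Longrightarrow> Phi1 p = 0"
  unfolding L1_def by (induction rule: comm_span.induct) (auto simp: Phi1_add Phi1_scale)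

lemma Phi2_L2: "p \<in> L2 n \<Longrightarrow> Phi2 p = 0"
  unfolding L2_def
proof (induction rule: comm_span.induct)
  case (br_in a b)
  then have "Eps a = 0" "Eps b = 0" using Eps_free L1_sub by blast+
  then show ?case using br_in by (simp add: Phi2_br Phi1_L1)
qed (auto simp: Phi2_add Phi2_scale)

lemma Phi1_gen: "Phi1 (gen i) = Poly_Mapping.single (Poly_Mapping.single (2*i) 1) 1"
  by (simp add: gen_def Phi1_single)
lemma Phi2_gen: "Phi2 (gen i) = Poly_Mapping.single (Poly_Mapping.single (2*i+1) 1) 1"
  by (simp add: gen_def Phi2_single)


lemma single_key_eq: "(v::'b::zero) \<noteq> 0 \<Longrightarrow> Poly_Mapping.single k v = Poly_Mapping.single k' v \<longleftrightarrow> k = k'"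
  by (metis lookup_single_eq lookup_single_not_eq)

lemma single_key_eq1: "Poly_Mapping.single (k::nat) (1::nat) = Poly_Mapping.single k' 1 \<longleftrightarrow> k = k'"
  by (rule single_key_eq) simp

lemma single_key_eq2: "Poly_Mapping.single (k::nat) (Suc 0) = Poly_Mapping.single k' (Suc 0) \<longleftrightarrow> k = k'"
  by (rule single_key_eq) simp

lemma Phi1_sum_gen: "Phi1 (\<Sum>i\<in>A. gen i :: 'k::comm_ring_1 ncpoly) = (\<Sum>i\<in>A. Poly_Mapping.single (Poly_Mapping.single (2*i) 1) 1)"
  by (induction A rule: infinite_finite_induct) (auto simp: Phi1_add Phi1_gen)

lemma Phi1_ssum_nz: "n \<ge> 1 \<Longrightarrow> Phi1 (ssum n :: 'k::comm_ring_1 ncpoly) \<noteq> 0"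
proof
  assume n: "n \<ge> 1" and z: "Phi1 (ssum n :: 'k ncpoly) = 0"
  have e: "Phi1 (ssum n :: 'k ncpoly) = (\<Sum>i<n. Poly_Mapping.single (Poly_Mapping.single (2*i) 1) 1)"
    unfolding ssum_def by (rule Phi1_sum_gen)
  have l: "Poly_Mapping.lookup (\<Sum>i<n. Poly_Mapping.single (Poly_Mapping.single (2*i) (1::nat)) (1::'k)) (Poly_Mapping.single 0 1)
     = (\<Sum>i<n. if i = 0 then 1 else (0::'k))"
    unfolding lookup_sum
    by (rule sum.cong) (auto simp: lookup_single when_def single_key_eq1 single_key_eq2)
  have "(\<Sum>i<n. if i = 0 then 1 else (0::'k)) = 1" using n by (simp add: sum.delta)
  with l e z show False by simp
qed

definition eqv :: "nat \<Rightarrow> 'k::comm_ring_1 ncpoly \<Rightarrow> 'k ncpoly \<Rightarrow> bool" where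
  "eqv n a b \<longleftrightarrow> a - b \<in> L2 n"

lemma eqv_refl[simp]: "eqv n a a" by (simp add: eqv_def L2_0)
lemma eqv_sym: "eqv n a b \<Longrightarrow> eqv n b a"
  unfolding eqv_def by (metis L2_neg minus_diff_eq)
lemma eqv_trans: "eqv n a b \<Longrightarrow> eqv n b c \<Longrightarrow> eqv n a c"
  unfolding eqv_def proof -
  assume "a - b \<in> L2 n" "b - c \<in> L2 n"
  then have "(a - b) + (b - c) \<in> L2 n" by (rule L2_add)
  then show "a - c \<in> L2 n" by simp
qed
lemma eqv_add: "eqv n a b \<Longrightarrow> eqv n c d \<Longrightarrow> eqv n (a + c) (b + d)"
  unfolding eqv_def proof -
  assume "a - b \<in> L2 n" "c - d \<in> L2 n"
  then have "(a - b) + (c - d) \<in> L2 n" by (rule L2_add)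
  then show "a + c - (b + d) \<in> L2 n" by (simp add: algebra_simps)
qed
lemma eqv_diff: "eqv n a b \<Longrightarrow> eqv n c d \<Longrightarrow> eqv n (a - c) (b - d)"
  unfolding eqv_def proof -
  assume "a - b \<in> L2 n" "c - d \<in> L2 n"
  then have "(a - b) - (c - d) \<in> L2 n" by (rule L2_diff)
  then show "a - c - (b - d) \<in> L2 n" by (simp add: algebra_simps)
qed
lemma eqv_scale: "eqv n a b \<Longrightarrow> eqv n (ncscale c a) (ncscale c b)"
  unfolding eqv_def by (metis L2_scale ncscale_diff)
lemma eqv_rbr: "eqv n a b \<Longrightarrow> x \<in> free_lie n \<Longrightarrow> eqv n (lie_br a x) (lie_br b x)"
  unfolding eqv_def by (metis L2_rbr lie_diff1)
lemma eqv_L2: "eqv n a 0 \<longleftrightarrow> a \<in> L2 n" by (simp add: eqv_def)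

fun H :: "'k::comm_ring_1 ncpoly \<Rightarrow> nat list \<Rightarrow> 'k ncpoly" where
  "H c [] = c"
| "H c (k # g) = lie_br (H c g) (gen k)"

lemma H_diff: "H (c - c') g = H c g - H c' g"
  by (induction g) (auto simp: lie_diff1)
lemma H_neg: "H (- c) g = - H c g"
  by (induction g) (auto simp: lie_neg1)
lemma H_zero[simp]: "H 0 g = 0"
  by (induction g) auto
lemma H_append: "H c (d @ e) = H (H c e) d"
  by (induction d) auto

lemma gen_free: "k < n \<Longrightarrow> gen k \<in> free_lie n"
  by (rule free_lie.gen_in)

lemma H_L1: "c \<in> L1 n \<Longrightarrow> set g \<subseteq> {..<n} \<Longrightarrow> H c g \<in> L1 n"
  by (induction g) (auto intro: L1_rbr gen_free)
lemma H_L2: "c \<in> L2 n \<Longrightarrow> set g \<subseteq> {..<n} \<Longrightarrow> H c g \<in> L2 n"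
  by (induction g) (auto intro: L2_rbr gen_free)
lemma H_cong: "eqv n c c' \<Longrightarrow> set g \<subseteq> {..<n} \<Longrightarrow> eqv n (H c g) (H c' g)"
  unfolding eqv_def by (metis H_L2 H_diff)

lemma swap: "d \<in> L1 n \<Longrightarrow> x < n \<Longrightarrow> y < n \<Longrightarrow>
   eqv n (lie_br (lie_br d (gen x)) (gen y)) (lie_br (lie_br d (gen y)) (gen x))"
  unfolding eqv_def using jacobi[of d "gen x" "gen y"]
  by (metis L2_br L1_br gen_free)

lemma H_insort: "c \<in> L1 n \<Longrightarrow> k < n \<Longrightarrow> set xi \<subseteq> {..<n} \<Longrightarrow> eqv n (H c (insort k xi)) (H c (k # xi))"
proof (induction xi)
  case Nil then show ?case by simp
next
  case (Cons a xi)
  show ?case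
  proof (cases "k \<le> a")
    case True then show ?thesis by simp
  next
    case False
    have a: "a < n" using Cons by auto
    have "eqv n (H c (insort k (a # xi))) (lie_br (H c (k # xi)) (gen a))"
      using False Cons a by (simp add: eqv_rbr gen_free)
    also have "lie_br (H c (k # xi)) (gen a) = lie_br (lie_br (H c xi) (gen k)) (gen a)" by simp
    finally have 1: "eqv n (H c (insort k (a # xi))) (lie_br (lie_br (H c xi) (gen k)) (gen a))" .
    have "eqv n (lie_br (lie_br (H c xi) (gen k)) (gen a)) (lie_br (lie_br (H c xi) (gen a)) (gen k))"
      using Cons a by (intro swap H_L1) auto
    with 1 show ?thesis by (simp add: eqv_trans)
  qed
qed

lemma H_sort: "c \<in> L1 n \<Longrightarrow> set g \<subseteq> {..<n} \<Longrightarrow> eqv n (H c (sort g)) (H c g)"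
proof (induction g)
  case Nil then show ?case by simp
next
  case (Cons k g)
  have "eqv n (H c (sort (k # g))) (H c (k # sort g))"
    using Cons H_insort[of c n k "sort g"] by simp
  also have "H c (k # sort g) = lie_br (H c (sort g)) (gen k)" by simp
  finally show ?case using Cons
    by (metis H.simps(2) eqv_rbr eqv_trans gen_free insert_subset lessThan_iff list.simps(15))
qed

lemma H_perm: "c \<in> L1 n \<Longrightarrow> set g \<subseteq> {..<n} \<Longrightarrow> mset g = mset g' \<Longrightarrow> eqv n (H c g) (H c g')"
proof -
  assume a: "c \<in> L1 n" "set g \<subseteq> {..<n}" "mset g = mset g'"
  then have s: "sort g = sort g'" by (metis sorted_list_of_multiset_mset)
  have "set g' \<subseteq> {..<n}" using a by (metis set_mset_mset)
  then show ?thesis using H_sort[OF a(1) a(2)] H_sort[of c n g'] a s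
    by (metis eqv_sym eqv_trans)
qed

inductive_set Cset :: "nat \<Rightarrow> 'k::comm_ring_1 ncpoly set" for n where
  Cg: "i < n \<Longrightarrow> j < n \<Longrightarrow> set g \<subseteq> {..<n} \<Longrightarrow> H (lie_br (gen i) (gen j)) g \<in> Cset n"
| Cl: "l \<in> L2 n \<Longrightarrow> l \<in> Cset n"
| Ca: "p \<in> Cset n \<Longrightarrow> q \<in> Cset n \<Longrightarrow> p + q \<in> Cset n"
| Cs: "p \<in> Cset n \<Longrightarrow> ncscale a p \<in> Cset n"

lemma C_neg: "p \<in> Cset n \<Longrightarrow> - p \<in> Cset n"
  by (metis Cset.Cs ncscale_neg)
lemma C_diff: "p \<in> Cset n \<Longrightarrow> q \<in> Cset n \<Longrightarrow> p - q \<in> Cset n"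
  by (metis diff_conv_add_uminus Cset.Ca C_neg)

lemma C1: "c \<in> Cset n \<Longrightarrow> k < n \<Longrightarrow> lie_br c (gen k) \<in> Cset n"
proof (induction rule: Cset.induct)
  case (Cg i j g)
  then show ?case using Cset.Cg[of i n j "k # g"] by simp
next
  case (Cl l) then show ?case by (simp add: Cset.Cl L2_rbr gen_free)
next
  case (Ca p q) then show ?case by (simp add: lie_add1 Cset.Ca)
next
  case (Cs p a) then show ?case by (simp add: lie_scale1 Cset.Cs)
qed

lemma C2: "q \<in> free_lie n \<Longrightarrow> c \<in> Cset n \<Longrightarrow> lie_br c q \<in> Cset n"
proof (induction q arbitrary: c rule: free_lie.induct)
  case (gen_in i) then show ?case by (simp add: C1)
next
  case zero_in then show ?case by (simp add: Cset.Cl L2_0)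
next
  case (add_in p q) then show ?case by (simp add: lie_add2 Cset.Ca)
next
  case (scale_in p a) then show ?case by (simp add: lie_scale2 Cset.Cs)
next
  case (br_in p q)
  then show ?case by (simp add: jacobi C_diff)
qed

lemma C3: "a \<in> free_lie n \<Longrightarrow> b \<in> free_lie n \<Longrightarrow> lie_br a b \<in> Cset n"
proof (induction a arbitrary: b rule: free_lie.induct)
  case (gen_in i)
  from gen_in(2) show ?case
  proof (induction b rule: free_lie.induct)
    case (gen_in j) then show ?case using Cset.Cg[of i n j "[]"] \<open>i < n\<close> by simp
  next
    case zero_in then show ?case by (simp add: Cset.Cl L2_0)
  next
    case (add_in p q) then show ?case by (simp add: lie_add2 Cset.Ca)
  next
    case (scale_in p a) then show ?case by (simp add: lie_scale2 Cset.Cs)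
  next
    case (br_in p q)
    then show ?case by (simp add: jacobi C_diff C2)
  qed
next
  case zero_in then show ?case by (simp add: Cset.Cl L2_0)
next
  case (add_in p q) then show ?case by (simp add: lie_add1 Cset.Ca)
next
  case (scale_in p a) then show ?case by (simp add: lie_scale1 Cset.Cs)
next
  case (br_in p q)
  then show ?case by (simp add: C2)
qed

lemma C4: "p \<in> L1 n \<Longrightarrow> p \<in> Cset n"
  unfolding L1_def
  by (induction rule: comm_span.induct) (auto simp: C3 intro: Cset.intros L2_0)

lemma lookup_mono: "Poly_Mapping.lookup (mono g) m = (if even m then count (mset g) (m div 2) else 0)"
  by (induction g) (auto simp: lookup_add lookup_single when_def, presburger+)

definition enc :: "nat list \<Rightarrow> nat \<Rightarrow> (nat \<Rightarrow>\<^sub>0 nat)" where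
  "enc g j = mono g + Poly_Mapping.single (2*j+1) 1"

lemma lookup_enc_odd: "Poly_Mapping.lookup (enc g j) (Suc (2*m)) = (if m = j then 1 else 0)"
  by (auto simp: enc_def lookup_add lookup_mono lookup_single when_def)
lemma lookup_enc_even: "Poly_Mapping.lookup (enc g j) (2*m) = count (mset g) m"
  by (auto simp: enc_def lookup_add lookup_mono lookup_single when_def) presburger

lemma enc_inj: "enc g j = enc g' j' \<Longrightarrow> j = j' \<and> mset g = mset g'"
proof -
  assume e: "enc g j = enc g' j'"
  have "Poly_Mapping.lookup (enc g j) (2*j+1) = Poly_Mapping.lookup (enc g' j') (2*j+1)" using e by simp
  then have "j = j'" by (simp add: lookup_enc_odd split: if_splits)
  moreover have "count (mset g) m = count (mset g') m" for m
    using lookup_enc_even[of g j m] lookup_enc_even[of g' j' m] e by simp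
  ultimately show ?thesis by (simp add: multiset_eqI)
qed

definition Nv :: "nat list \<Rightarrow> nat \<Rightarrow> 'k::comm_ring_1 ncpoly" where
  "Nv g j = (if \<exists>k\<in>set g. k < j then
      ncscale ((-1)^length g) (H (lie_br (gen j) (gen (Min (set g)))) (remove1 (Min (set g)) g)) else 0)"

definition Psimon :: "(nat \<Rightarrow>\<^sub>0 nat) \<Rightarrow> 'k::comm_ring_1 ncpoly" where
  "Psimon b = (if \<exists>g j. b = enc g j then
      Nv (fst (SOME x. b = enc (fst x) (snd x))) (snd (SOME x. b = enc (fst x) (snd x))) else 0)"

definition Psi :: "'k::comm_ring_1 mp \<Rightarrow> 'k ncpoly" where
  "Psi m = lext (\<lambda>b c. ncscale c (Psimon b)) m"

lemma Psi_add: "Psi (p + q) = Psi p + Psi q"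
  unfolding Psi_def by (rule lext_add) (auto simp: ncscale_add2)
lemma Psi_single: "Psi (Poly_Mapping.single b c) = ncscale c (Psimon b)"
  unfolding Psi_def by (rule lext_single) auto
lemma Psi_zero[simp]: "Psi 0 = 0" by (simp add: Psi_def)
lemma Psi_neg: "Psi (- p) = - Psi p" by (metis add_eq_0_iff2 Psi_add Psi_zero)
lemma Psi_diff: "Psi (p - q) = Psi p - Psi q" by (metis diff_conv_add_uminus Psi_add Psi_neg)
lemma Psi_scale: "Psi (Poly_Mapping.single 0 a * m) = ncscale a (Psi m)"
  by (induction m rule: pm_induct) (auto simp: distrib_left Psi_add ncscale_add mult_single Psi_single ncscale_mult)

lemma Nv_perm:
  assumes "mset g = mset g'" "j < n" "set g \<subseteq> {..<n}"
  shows "eqv n (Nv g j) (Nv g' j)"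
proof -
  have se: "set g = set g'" using assms(1) by (metis set_mset_mset)
  have le: "length g = length g'" using assms(1) by (metis size_mset)
  show ?thesis
  proof (cases "\<exists>k\<in>set g. k < j")
    case False then show ?thesis by (simp add: Nv_def se)
  next
    case True
    define p where "p = Min (set g)"
    have pin: "p \<in> set g" using True unfolding p_def by (intro Min_in) auto
    have c: "lie_br (gen j) (gen p) \<in> L1 n" using assms pin by (auto intro!: L1_br gen_free)
    have r: "set (remove1 p g) \<subseteq> {..<n}" by (meson assms(3) set_remove1_subset order_trans)
    have "eqv n (H (lie_br (gen j) (gen p)) (remove1 p g)) (H (lie_br (gen j) (gen p)) (remove1 p g'))"
      by (rule H_perm[OF c r]) (simp add: assms(1))
    then have "eqv n (ncscale ((- 1) ^ length g) (H (lie_br (gen j) (gen p)) (remove1 p g)))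
       (ncscale ((- 1) ^ length g) (H (lie_br (gen j) (gen p)) (remove1 p g')))" by (rule eqv_scale)
    then show ?thesis using True
      by (simp add: Nv_def se[symmetric] le[symmetric] p_def[symmetric])
  qed
qed

lemma Psimon_enc: "j < n \<Longrightarrow> set g \<subseteq> {..<n} \<Longrightarrow> eqv n (Psimon (enc g j)) (Nv g j)"
proof -
  assume a: "j < n" "set g \<subseteq> {..<n}"
  define x where "x = (SOME x. enc g j = enc (fst x) (snd x))"
  have "enc g j = enc (fst x) (snd x)" unfolding x_def by (rule someI[of _ "(g, j)"]) simp
  then have e: "j = snd x" "mset g = mset (fst x)" using enc_inj by blast+
  have "Psimon (enc g j) = Nv (fst x) (snd x)" unfolding Psimon_def x_def[symmetric] by auto
  then show ?thesis using Nv_perm[OF e(2) a] e(1) by (metis eqv_sym)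
qed

lemma Phi1_H: "Phi1 (H (lie_br a b) g) = 0" by (cases g) auto
lemma Eps_H: "Eps (H (lie_br a b) g) = 0" by (cases g) auto
lemma Eps_gen: "Eps (gen k) = 0" by (simp add: gen_def Eps_single)

lemma enc_cons: "enc (i # k # g) j = Poly_Mapping.single (2*k) 1 + enc (i # g) j"
  by (simp add: enc_def add_ac)

lemma Phi2_G: "Phi2 (H (lie_br (gen i) (gen j)) g :: 'k::comm_ring_1 ncpoly) =
   Poly_Mapping.single (enc (i#g) j) ((-1)^length g) - Poly_Mapping.single (enc (j#g) i) ((-1)^length g)"
proof (induction g)
  case Nil
  show ?case by (simp add: Phi2_br Phi1_gen Phi2_gen Eps_gen mult_single enc_def)
next
  case (Cons k g)
  have "Phi2 (H (lie_br (gen i) (gen j)) (k # g) :: 'k ncpoly) =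
     - (Poly_Mapping.single (Poly_Mapping.single (2*k) 1) 1 * Phi2 (H (lie_br (gen i) (gen j)) g :: 'k ncpoly))"
    by (simp add: Phi2_br Phi1_H Eps_H Eps_gen Phi1_gen)
  also have "\<dots> = Poly_Mapping.single (enc (i#k#g) j) ((-1)^length (k#g)) - Poly_Mapping.single (enc (j#k#g) i) ((-1)^length (k#g))"
    unfolding Cons enc_cons by (simp add: right_diff_distrib mult_single single_uminus)
  finally show ?case .
qed

lemma Theta_G: "Psi (Phi2 (H (lie_br (gen i) (gen j)) g :: 'k::comm_ring_1 ncpoly)) =
   ncscale ((-1)^length g) (Psimon (enc (i#g) j)) - ncscale ((-1)^length g) (Psimon (enc (j#g) i))"
  by (simp add: Phi2_G Psi_diff Psi_single)

lemma sgn_sq: "((-1::'k::comm_ring_1)^m) * (-1)^m = 1"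
  by (simp add: power_mult_distrib[symmetric])

lemma claim_gt:
  assumes ji: "j < i" and i: "i < n" and g: "set g \<subseteq> {..<n}"
  shows "eqv n (ncscale ((-1)^length g) (Nv (i#g) j) - ncscale ((-1)^length g) (Nv (j#g) i))
           (H (lie_br (gen i) (gen j)) g :: 'k::comm_ring_1 ncpoly)"
proof -
  define s :: 'k where "s = (-1)^length g"
  have ss: "s * s = 1" by (simp add: s_def sgn_sq)
  have jn: "j < n" using ji i by simp
  show ?thesis
  proof (cases "\<exists>k\<in>set g. k < j")
    case False
    have N1: "Nv (i#g) j = (0 :: 'k ncpoly)" using False ji by (auto simp: Nv_def)
    have mj: "Min (insert j (set g)) = j" using False by (intro Min_eqI) auto
    have N2: "Nv (j#g) i = ncscale (- s) (H (lie_br (gen i) (gen j)) g :: 'k ncpoly)"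
      using ji by (auto simp: Nv_def mj s_def)
    have "ncscale s (Nv (i#g) j) - ncscale s (Nv (j#g) i) = (H (lie_br (gen i) (gen j)) g :: 'k ncpoly)"
      by (simp add: N1 N2 ncscale_mult ncscale_neg2 ncscale_minus ss)
    then show ?thesis by (simp add: s_def)
  next
    case True
    then obtain k0 where k0: "k0 \<in> set g" "k0 < j" by blast
    define p where "p = Min (set g)"
    have pin: "p \<in> set g" using k0 unfolding p_def by (intro Min_in) auto
    have ple: "\<And>y. y \<in> set g \<Longrightarrow> p \<le> y" unfolding p_def by simp
    have pj: "p < j" using ple[OF k0(1)] k0 by simp
    have pn: "p < n" using pin g by auto
    have mi: "Min (insert i (set g)) = p" using pin ple pj ji by (intro Min_eqI) auto
    have mj: "Min (insert j (set g)) = p" using pin ple pj ji by (intro Min_eqI) auto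
    define g' where "g' = remove1 p g"
    have g'n: "set g' \<subseteq> {..<n}" unfolding g'_def by (meson g set_remove1_subset order_trans)
    have r1: "remove1 p (i#g) = i # g'" using pj ji by (simp add: g'_def)
    have r2: "remove1 p (j#g) = j # g'" using pj by (simp add: g'_def)
    define X :: "'k ncpoly" where "X = H (lie_br (gen j) (gen p)) (i # g')"
    define Y :: "'k ncpoly" where "Y = H (lie_br (gen i) (gen p)) (j # g')"
    have c1: "\<exists>k\<in>set (i#g). k < j" using k0 by auto
    have c2: "\<exists>k\<in>set (j#g). k < i" using ji by auto
    have "Nv (i#g) j = ncscale ((-1)^length (i#g)) (H (lie_br (gen j) (gen (Min (set (i#g))))) (remove1 (Min (set (i#g))) (i#g)))"
      unfolding Nv_def using c1 by (rule if_P)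
    also have "\<dots> = ncscale (- s) X" unfolding list.set(2) mi r1 X_def s_def by simp
    finally have N1: "Nv (i#g) j = ncscale (- s) X" .
    have "Nv (j#g) i = ncscale ((-1)^length (j#g)) (H (lie_br (gen i) (gen (Min (set (j#g))))) (remove1 (Min (set (j#g))) (j#g)))"
      unfolding Nv_def using c2 by (rule if_P)
    also have "\<dots> = ncscale (- s) Y" unfolding list.set(2) mj r2 Y_def s_def by simp
    finally have N2: "Nv (j#g) i = ncscale (- s) Y" .
    have E: "ncscale s (Nv (i#g) j) - ncscale s (Nv (j#g) i) = Y - X"
      by (simp add: N1 N2 ncscale_mult ss ncscale_neg2 ncscale_minus)
    have A0: "lie_br (gen j) (gen p) \<in> L1 n" using jn pn by (intro L1_br gen_free)
    have B0: "lie_br (gen i) (gen p) \<in> L1 n" using i pn by (intro L1_br gen_free)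
    have C0: "lie_br (gen i) (gen j) \<in> L1 n" using i jn by (intro L1_br gen_free)
    have "eqv n X (H (lie_br (gen j) (gen p)) (g' @ [i]))"
      unfolding X_def by (rule H_perm[OF A0]) (use g'n i in auto)
    then have X': "eqv n X (H (lie_br (lie_br (gen j) (gen p)) (gen i)) g')" by (simp add: H_append)
    have "eqv n Y (H (lie_br (gen i) (gen p)) (g' @ [j]))"
      unfolding Y_def by (rule H_perm[OF B0]) (use g'n jn in auto)
    then have Y': "eqv n Y (H (lie_br (lie_br (gen i) (gen p)) (gen j)) g')" by (simp add: H_append)
    have mg: "mset g = mset (g' @ [p])" using pin by (simp add: g'_def)
    have "eqv n (H (lie_br (gen i) (gen j)) g) (H (lie_br (gen i) (gen j)) (g' @ [p]))"
      by (rule H_perm[OF C0 g mg])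
    then have G': "eqv n (H (lie_br (gen i) (gen j)) g) (H (lie_br (lie_br (gen i) (gen j)) (gen p)) g')"
      by (simp add: H_append)
    have jac: "lie_br (lie_br (gen i) (gen p)) (gen j) - lie_br (lie_br (gen j) (gen p)) (gen i)
        = (lie_br (lie_br (gen i) (gen j)) (gen p) :: 'k ncpoly)"
      by (simp add: lie_br_eq algebra_simps)
    have "eqv n (Y - X) (H (lie_br (lie_br (gen i) (gen p)) (gen j)) g' - H (lie_br (lie_br (gen j) (gen p)) (gen i)) g')"
      using X' Y' by (rule eqv_diff[rotated])
    also have "H (lie_br (lie_br (gen i) (gen p)) (gen j)) g' - H (lie_br (lie_br (gen j) (gen p)) (gen i)) g'
       = (H (lie_br (lie_br (gen i) (gen j)) (gen p)) g' :: 'k ncpoly)"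
      using arg_cong[OF jac, of "\<lambda>c. H c g'"] by (simp only: H_diff)
    finally have "eqv n (Y - X) (H (lie_br (gen i) (gen j)) g)"
      using G' eqv_sym eqv_trans by blast
    then show ?thesis using E by (simp add: s_def)
  qed
qed

lemma eqv_neg: "eqv n a b \<Longrightarrow> eqv n (- a) (- b)"
  using eqv_diff[of n 0 0 a b] by simp

lemma claim_gt2:
  assumes ji: "j < i" and i: "i < n" and g: "set g \<subseteq> {..<n}"
  shows "eqv n (Psi (Phi2 (H (lie_br (gen i) (gen j)) g))) (H (lie_br (gen i) (gen j)) g :: 'k::comm_ring_1 ncpoly)"
proof -
  have jn: "j < n" using ji i by simp
  have e1: "eqv n (Psimon (enc (i#g) j)) (Nv (i#g) j :: 'k ncpoly)" using jn i g by (intro Psimon_enc) auto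
  have e2: "eqv n (Psimon (enc (j#g) i)) (Nv (j#g) i :: 'k ncpoly)" using jn i g by (intro Psimon_enc) auto
  have "eqv n (Psi (Phi2 (H (lie_br (gen i) (gen j)) g :: 'k ncpoly)))
     (ncscale ((-1)^length g) (Nv (i#g) j) - ncscale ((-1)^length g) (Nv (j#g) i))"
    unfolding Theta_G by (intro eqv_diff eqv_scale e1 e2)
  then show ?thesis using claim_gt[OF ji i g] eqv_trans by blast
qed

lemma claim:
  assumes i: "i < n" and j: "j < n" and g: "set g \<subseteq> {..<n}"
  shows "eqv n (Psi (Phi2 (H (lie_br (gen i) (gen j)) g))) (H (lie_br (gen i) (gen j)) g :: 'k::comm_ring_1 ncpoly)"
proof -
  consider "j < i" | "i = j" | "i < j" by linarith
  then show ?thesis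
  proof cases
    case 1 then show ?thesis using claim_gt2 i g by blast
  next
    case 2 then show ?thesis by simp
  next
    case 3
    have "eqv n (Psi (Phi2 (H (lie_br (gen j) (gen i)) g))) (H (lie_br (gen j) (gen i)) g :: 'k ncpoly)"
      using claim_gt2 3 j g by blast
    then have "eqv n (- Psi (Phi2 (H (lie_br (gen j) (gen i)) g))) (- H (lie_br (gen j) (gen i)) g :: 'k ncpoly)"
      by (rule eqv_neg)
    moreover have "lie_br (gen i) (gen j) = - (lie_br (gen j) (gen i) :: 'k ncpoly)" by (rule lie_anti)
    ultimately show ?thesis by (simp add: H_neg Phi2_neg Psi_neg)
  qed
qed

lemma main: "c \<in> Cset n \<Longrightarrow> eqv n (Psi (Phi2 c)) c"
proof (induction rule: Cset.induct)
  case (Cg i j g) then show ?case by (rule claim)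
next
  case (Cl l) then show ?case by (simp add: Phi2_L2 eqv_def L2_neg)
next
  case (Ca p q) then show ?case by (simp add: Phi2_add Psi_add eqv_add)
next
  case (Cs p a) then show ?case by (simp add: Phi2_scale Psi_scale eqv_scale)
qed

lemma INJ': "n \<ge> 1 \<Longrightarrow> w \<in> L1 n \<Longrightarrow> lie_br (ssum n) w \<in> L2 n \<Longrightarrow> (w::'k::field_char_0 ncpoly) \<in> L2 n"
proof -
  assume n: "n \<ge> 1" and w: "w \<in> L1 n" and b: "lie_br (ssum n) w \<in> L2 n"
  have "Phi2 (lie_br (ssum n) w) = 0" using b by (rule Phi2_L2)
  moreover have "Eps w = 0" using w L1_sub Eps_free by blast
  moreover have "Eps (ssum n :: 'k ncpoly) = 0" using ssum_free Eps_free by blast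
  moreover have "Phi1 w = 0" using w by (rule Phi1_L1)
  ultimately have "Phi1 (ssum n) * Phi2 w = 0" by (simp add: Phi2_br)
  then have "Phi2 w = 0" using Phi1_ssum_nz[OF n, where 'k='k] by simp
  moreover have "eqv n (Psi (Phi2 w)) w" using w C4 main by blast
  ultimately show ?thesis by (simp add: eqv_def L2_neg)
    (metis L2_neg minus_minus)
qed

theorem theorem2p1:
  fixes n :: nat and u :: "'k::field_char_0 ncpoly"
  assumes "n \<ge> 2"
    and "u \<in> L1 n"
  shows "(\<forall>v\<in>free_lie n. sym_F n v \<longrightarrow> sym_F n (psi u v)) \<longleftrightarrow> sym_F n u"
proof
  assume H: "\<forall>v\<in>free_lie n. sym_F n v \<longrightarrow> sym_F n (psi u v)"
  have ss: "sym_F n (ssum n :: 'k ncpoly)"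
    unfolding sym_F_def by (simp add: ssum_perm L2_0)
  have sp: "sym_F n (psi u (ssum n))" using H ss ssum_free by blast
  show "sym_F n u"
    unfolding sym_F_def
  proof (intro allI impI)
    fix \<pi> assume p: "\<pi> permutes {..<n}"
    have "perm_act \<pi> (psi u (ssum n)) - psi u (ssum n) \<in> L2 n" using sp p sym_F_def by blast
    moreover have "perm_act \<pi> (psi u (ssum n)) - psi u (ssum n) = lie_br (ssum n) (perm_act \<pi> u - u)"
      by (simp add: psi_def perm_act_add perm_act_br ssum_perm[OF p] lie_diff2)
    ultimately have "lie_br (ssum n) (perm_act \<pi> u - u) \<in> L2 n" by simp
    moreover have "perm_act \<pi> u - u \<in> L1 n" using assms p by (simp add: L1_diff perm_L1)
    ultimately show "perm_act \<pi> u - u \<in> L2 n" using INJ'[of n "perm_act \<pi> u - u"] assms(1) by simp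
  qed
next
  assume su: "sym_F n u"
  show "\<forall>v\<in>free_lie n. sym_F n v \<longrightarrow> sym_F n (psi u v)"
  proof (intro ballI impI)
    fix v :: "'k ncpoly" assume v: "v \<in> free_lie n" and sv: "sym_F n v"
    show "sym_F n (psi u v)" unfolding sym_F_def
    proof (intro allI impI)
      fix \<pi> assume p: "\<pi> permutes {..<n}"
      have dv: "perm_act \<pi> v - v \<in> L2 n" using sv p sym_F_def by blast
      have du: "perm_act \<pi> u - u \<in> L2 n" using su p sym_F_def by blast
      have pu: "perm_act \<pi> u \<in> free_lie n" using p assms(2) L1_sub perm_free_lie by blast
      have "perm_act \<pi> (psi u v) - psi u v = (perm_act \<pi> v - v) + lie_br (perm_act \<pi> v - v) (perm_act \<pi> u)
             + lie_br v (perm_act \<pi> u - u)"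
        by (simp add: psi_def perm_act_add perm_act_br lie_diff1 lie_diff2)
      also have "\<dots> \<in> L2 n" using dv du pu v by (intro L2_add L2_rbr L2_lbr) auto
      finally show "perm_act \<pi> (psi u v) - psi u v \<in> L2 n" .
    qed
  qed
qed

end
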